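(* Let $p\ge2$ and $p'$ be coprime positive integers, let $T_m$ denote the $m$-th Chebyshev polynomial of the first kind ($T_m(\cosh\tau)=\cosh(m\tau)$), and let $G^{(2)}_{\mathrm{cl.}}(\zeta,Q)$ be the semiclassical spectral polynomial described below. Then, up to normalisation, $$G^{(2)}_{\mathrm{cl.}}(\zeta,Q)=\begin{cases}\displaystyle\prod_{a=1}^{(p-1)/2}\left(T_p\Big(\frac{Q}{2\cos(\pi p'a/p)}\Big)-T_{p'}\big((-1)^a\zeta\big)\right), & p\text{ odd},\\[2ex] \displaystyle Q^{p/2}\prod_{a=1}^{(p-2)/2}\left(T_p\Big(\frac{Q}{2\cos(\pi p'a/p)}\Big)-T_{p'}\big((-1)^a\zeta\big)\right), & p\text{ even}.\end{cases}$$
   Context: $G^{(2)}_{\mathrm{cl.}}(\zeta,Q)$ is the $g_s\to0$ limit, in the conformal background, of the characteristic polynomial $\det\big(Q\,\mathbb{I}-\mathcal{Q}^{(2)}(t;\zeta)\big)$ of the $\binom p2\times\binom p2$ Lax matrix governing $\partial_\zeta$ of the vector of degree-$2$ generalised Wronskians of solutions of the $(p,p')$ system $\zeta\psi=\mathbb{P}\psi$, $\partial_\zeta\psi=\mathbb{Q}\psi$. Concretely, in this limit it is the polynomial in $Q$ of degree $p(p-1)/2$ whose zeros, for $\zeta=\cosh(p\tau)$, are $Q^{(j_1)}(\tau)+Q^{(j_2)}(\tau)$ for $1\le j_1<j_2\le p$, where $Q^{(j)}(\tau)=\cosh\big[p'(\tau-2\pi\mathrm{i}(j-1)/p)\big]$.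 *)

theory Defs
  imports "HOL-Analysis.Analysis"
begin

fun cheb_T :: "nat \<Rightarrow> complex \<Rightarrow> complex" where
  "cheb_T 0 x = 1"
| "cheb_T (Suc 0) x = x"
| "cheb_T (Suc (Suc n)) x = 2 * x * cheb_T (Suc n) x - cheb_T n x"

definition Qbranch :: "nat \<Rightarrow> nat \<Rightarrow> complex \<Rightarrow> nat \<Rightarrow> complex" where
  "Qbranch p p' \<tau> j =
     cosh (of_nat p' * (\<tau> - 2 * of_real pi * \<i> * (of_nat j - 1) / of_nat p))"

text \<open>The semiclassical spectral polynomial G^(2)_cl(zeta,Q): the monic polynomial in Q
  of degree p(p-1)/2 whose zeros are Q^(j1)(tau)+Q^(j2)(tau), 1 <= j1 < j2 <= p,
  where zeta = cosh(p tau) (tau some chosen preimage).\<close>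
definition G2cl :: "nat \<Rightarrow> nat \<Rightarrow> complex \<Rightarrow> complex \<Rightarrow> complex" where
  "G2cl p p' \<zeta> Q =
     (let \<tau> = (SOME t. cosh (of_nat p * t) = \<zeta>) in
      \<Prod>(j1, j2) \<in> {(j1, j2). 1 \<le> j1 \<and> j1 < j2 \<and> j2 \<le> p}.
         (Q - (Qbranch p p' \<tau> j1 + Qbranch p p' \<tau> j2)))"

end

theory Submission
  imports Defs "HOL-Computational_Algebra.Fundamental_Theorem_Algebra"
begin


lemma prod_roots_pow:
  fixes d y :: complex and f :: "nat \<Rightarrow> complex" and p :: nat
  assumes p: "p \<ge> 1" and inj: "inj_on f {..<p}" and rt: "\<And>k. k < p \<Longrightarrow> f k ^ p = 1"
  shows "(\<Prod>k<p. (y - d * f k)) = y ^ p - d ^ p"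
proof (cases "d = 0")
  case True
  then show ?thesis using p by simp
next
  case False
  define P :: "complex poly" where "P = monom 1 p - [:d^p:]"
  have dp: "d ^ p \<noteq> 0" using False by simp
  have polyP: "poly P z = z ^ p - d ^ p" for z by (simp add: P_def poly_monom)
  have degP: "degree P = p"
  proof -
    have "P = monom 1 p + (- [:d^p:])" by (simp add: P_def)
    also have "degree \<dots> = p" using p by (subst degree_add_eq_left) (auto simp: degree_monom_eq)
    finally show ?thesis .
  qed
  have lcP: "lead_coeff P = 1" using p degP by (cases p) (auto simp: P_def)
  have sqf: "rsquarefree P"
  proof (subst rsquarefree_roots, intro allI notI)
    fix a assume h: "poly P a = 0 \<and> poly (pderiv P) a = 0"
    have "poly (pderiv P) a = of_nat p * a ^ (p - 1)"
      by (simp add: P_def pderiv_diff pderiv_monom poly_monom pderiv_pCons)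
    with h p have "a = 0" by simp
    with h p dp show False by (simp add: polyP power_0_left)
  qed
  have inj2: "inj_on (\<lambda>k. d * f k) {..<p}" using inj False by (auto simp: inj_on_def)
  have sub: "(\<lambda>k. d * f k) ` {..<p} \<subseteq> {z. poly P z = 0}"
    using rt by (auto simp: polyP power_mult_distrib)
  have card1: "card ((\<lambda>k. d * f k) ` {..<p}) = p" using card_image[OF inj2] by simp
  have roots_eq: "{z. poly P z = 0} = {z. z ^ p = d ^ p}" by (simp add: polyP)
  have card2: "card {z. poly P z = 0} = p" unfolding roots_eq using card_nth_roots[OF dp] p by simp
  have fin: "finite {z. poly P z = 0}" unfolding roots_eq using p by auto
  have img: "(\<lambda>k. d * f k) ` {..<p} = {z. poly P z = 0}"
    using card_subset_eq[OF fin sub] card1 card2 by simp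
  have "(\<Prod>k<p. (y - d * f k)) = (\<Prod>z\<in>{z. poly P z = 0}. (y - z))"
    unfolding img[symmetric] by (subst prod.reindex[OF inj2]) simp
  also have "\<dots> = poly (smult (lead_coeff P) (\<Prod>z|poly P z = 0. [:-z, 1:])) y"
    by (simp add: lcP poly_prod)
  also have "\<dots> = poly P y" by (subst complex_poly_decompose_rsquarefree[OF sqf]) simp
  finally show ?thesis by (simp add: polyP)
qed



lemma cheb_T_yu:
  fixes y u x :: complex assumes yu: "y * u = 1" and x: "x = (y + u) / 2"
  shows "cheb_T n x = (y ^ n + u ^ n) / 2"
proof -
  have "cheb_T n x = (y ^ n + u ^ n) / 2 \<and>
        cheb_T (Suc n) x = (y ^ Suc n + u ^ Suc n) / 2"
  proof (induction n)
    case 0 then show ?case using x by simp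
  next
    case (Suc n)
    have e: "cheb_T (Suc (Suc n)) x = 2 * x * cheb_T (Suc n) x - cheb_T n x" by simp
    have "2 * x * ((y ^ Suc n + u ^ Suc n) / 2) - (y ^ n + u ^ n) / 2
          = (y ^ Suc (Suc n) + u ^ Suc (Suc n)) / 2"
    proof -
      have yu': "u * y = 1" using yu by (simp add: mult.commute)
      have a: "y * u ^ Suc n = u ^ n"
        by (simp only: power_Suc mult.assoc[symmetric] yu mult_1_left)
      have b: "u * y ^ Suc n = y ^ n"
        by (simp only: power_Suc mult.assoc[symmetric] yu' mult_1_left)
      have c: "(y + u) * (y ^ Suc n + u ^ Suc n) = y ^ Suc (Suc n) + u ^ Suc (Suc n) + (y ^ n + u ^ n)"
        by (simp only: distrib_left distrib_right a b power_Suc[of y "Suc n"] power_Suc[of u "Suc n"]) (simp add: add_ac)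
      have "2 * x * ((y ^ Suc n + u ^ Suc n) / 2) - (y ^ n + u ^ n) / 2
           = ((y + u) * (y ^ Suc n + u ^ Suc n) - (y ^ n + u ^ n)) / 2"
        unfolding x by (simp add: field_simps)
      also have "\<dots> = (y ^ Suc (Suc n) + u ^ Suc (Suc n)) / 2" by (simp only: c) simp
      finally show ?thesis .
    qed
    moreover have h1: "cheb_T n x = (y ^ n + u ^ n) / 2" and h2: "cheb_T (Suc n) x = (y ^ Suc n + u ^ Suc n) / 2"
      using Suc.IH by blast+
    ultimately show ?case by (simp only: e h1 h2)
  qed
  then show ?thesis by blast
qed

lemma cheb_T_y:
  fixes y :: complex assumes "y \<noteq> 0"
  shows "cheb_T n ((y + inverse y) / 2) = (y ^ n + inverse y ^ n) / 2"
  using cheb_T_yu[of y "inverse y"] assms by simp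

lemma cosh_exp': "cosh (z::complex) = (exp z + inverse (exp z)) / 2"
  by (simp add: cosh_def exp_minus scaleR_conv_of_real field_simps)

lemma cheb_T_cosh: "cheb_T n (cosh (z::complex)) = cosh (of_nat n * z)"
  using cheb_T_y[of "exp z" n] by (simp add: cosh_exp' exp_of_nat_mult power_inverse)

lemma cosh_2pin: "cosh (z + of_nat n * (2 * of_real pi * \<i>)) = cosh (z::complex)"
proof -
  have "exp (z + of_nat n * (2 * of_real pi * \<i>)) = exp z"
    by (simp add: exp_add exp_of_nat_mult)
  then show ?thesis by (simp add: cosh_exp')
qed

lemma cosh_pin: "cosh (z + of_nat n * (of_real pi * \<i>)) = (-1) ^ n * cosh (z::complex)"
proof -
  have e: "exp (of_real pi * \<i>) = -1" by (simp add: exp_Euler)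
  have "exp (z + of_nat n * (of_real pi * \<i>)) = (-1)^n * exp z"
    by (simp add: exp_add exp_of_nat_mult e)
  then show ?thesis by (simp add: cosh_exp' field_simps power_minus')
qed

lemma cosh_pin_minus: "cosh (z - of_nat n * (of_real pi * \<i>)) = (-1) ^ n * cosh (z::complex)"
proof -
  have e: "z - of_nat n * (of_real pi * \<i>) = -(-z + of_nat n * (of_real pi * \<i>))" by simp
  show ?thesis unfolding e cosh_minus cosh_pin by simp
qed

lemma cosh_sum: "cosh (c + d) + cosh (c - d) = 2 * cosh c * cosh (d::complex)"
  by (simp add: cosh_add cosh_diff)

lemma of_real_cos_cosh: "complex_of_real (cos x) = cosh (\<i> * of_real x)"
  by (metis cos_conv_cosh cos_of_real)

lemma cosh_surj: "\<exists>z::complex. cosh z = w"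
proof -
  define y where "y = w + csqrt (w^2 - 1)"
  have "y * (w - csqrt (w^2 - 1)) = 1" by (simp add: y_def algebra_simps power2_eq_square[symmetric])
  then have y0: "y \<noteq> 0" and iy: "inverse y = w - csqrt (w^2 - 1)"
    by (auto intro: inverse_unique)
  have "cosh (Ln y) = (y + inverse y) / 2" using y0 by (simp add: cosh_exp')
  also have "\<dots> = (y + (w - csqrt (w^2 - 1))) / 2" by (simp only: iy)
  also have "\<dots> = w" by (simp add: y_def)
  finally show ?thesis by blast
qed



lemma exists_y: "\<exists>y::complex. y \<noteq> 0 \<and> x = (y + inverse y) / 2"
proof -
  define y where "y = x + csqrt (x^2 - 1)"
  have "y * (x - csqrt (x^2 - 1)) = 1" by (simp add: y_def algebra_simps power2_eq_square[symmetric])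
  then have y0: "y \<noteq> 0" and iy: "inverse y = x - csqrt (x^2 - 1)"
    by (auto intro: inverse_unique)
  have "(y + inverse y) / 2 = (y + (x - csqrt (x^2 - 1))) / 2" by (simp only: iy)
  also have "\<dots> = x" by (simp add: y_def)
  finally show ?thesis using y0 by metis
qed

lemma root_inj:
  fixes p p' :: nat
  assumes p: "p \<ge> 1" and cop: "coprime p p'"
  shows "inj_on (\<lambda>k. exp (2 * of_real pi * \<i> * of_nat p' / of_nat p) ^ k) {..<p}"
proof (rule inj_onI)
  fix k l assume k: "k \<in> {..<p}" and l: "l \<in> {..<p}"
    and eq: "exp (2 * of_real pi * \<i> * of_nat p' / of_nat p) ^ k = exp (2 * of_real pi * \<i> * of_nat p' / of_nat p) ^ l"
  have r: "exp (2 * of_real pi * \<i> * of_nat p' / of_nat p) ^ m = exp (2 * of_real pi * \<i> * of_nat (p' * m) / of_nat p)" for m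
    by (simp add: exp_of_nat_mult[symmetric] mult_ac)
  from eq have "(p' * k) mod p = (p' * l) mod p"
    unfolding r using complex_root_unity_eq[OF p] by blast
  moreover have key: "k1 = l1" if "k1 \<le> l1" "l1 < p" "(p' * k1) mod p = (p' * l1) mod p" for k1 l1
  proof -
    have "p dvd p' * l1 - p' * k1" using that mod_eq_dvd_iff_nat[of "p' * k1" "p' * l1" p] by simp
    then have "p dvd p' * (l1 - k1)" by (simp add: diff_mult_distrib2)
    then have "p dvd (l1 - k1)" using cop by (simp add: coprime_dvd_mult_right_iff)
    moreover have "l1 - k1 < p" using that by simp
    ultimately have "l1 - k1 = 0" by (metis dvd_imp_le not_less zero_less_iff_neq_zero)
    then show ?thesis using that by simp
  qed
  ultimately show "k = l" using k l
  proof (cases "k \<le> l")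
    case False
    then show ?thesis using key[of l k] \<open>(p' * k) mod p = (p' * l) mod p\<close> k by simp
  qed (auto intro: key)
qed

lemma cheb_prod:
  fixes p p' :: nat and x w :: complex
  assumes p: "p \<ge> 1" and cop: "coprime p p'"
  shows "(\<Prod>k<p. (x - cosh (w + of_nat k * (2 * of_real pi * \<i> * of_nat p' / of_nat p)))) * 2 ^ (p - 1)
         = cheb_T p x - cosh (of_nat p * w)"
proof -
  define \<theta> where "\<theta> = 2 * of_real pi * \<i> * of_nat p' / (of_nat p :: complex)"
  define \<omega> where "\<omega> = exp \<theta>"
  define e where "e = exp w"
  obtain y where y0: "y \<noteq> 0" and xy: "x = (y + inverse y) / 2" using exists_y by blast
  have e0: "e \<noteq> 0" by (simp add: e_def)
  have w0: "\<omega> \<noteq> 0" by (simp add: \<omega>_def)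
  have wp: "\<omega> ^ p = 1"
  proof -
    have "\<omega> ^ p = exp (of_nat p * \<theta>)" by (simp add: \<omega>_def exp_of_nat_mult)
    also have "of_nat p * \<theta> = of_nat p' * (2 * of_real pi * \<i>)" using p by (simp add: \<theta>_def)
    also have "exp \<dots> = 1" by (simp add: exp_of_nat_mult)
    finally show ?thesis .
  qed
  have inj1: "inj_on (\<lambda>k. \<omega> ^ k) {..<p}" using root_inj[OF p cop] by (simp add: \<omega>_def \<theta>_def)
  have inj2: "inj_on (\<lambda>k. inverse \<omega> ^ k) {..<p}"
    using inj1 by (auto simp: inj_on_def power_inverse)
  have fac: "x - cosh (w + of_nat k * \<theta>) = (y - e * \<omega> ^ k) * (y - inverse e * inverse \<omega> ^ k) / (2 * y)" for k
  proof -
    have E: "exp (w + of_nat k * \<theta>) = e * \<omega> ^ k" by (simp add: e_def \<omega>_def exp_add exp_of_nat_mult)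
    have E0: "e * \<omega> ^ k \<noteq> 0" using e0 w0 by simp
    show ?thesis unfolding cosh_exp' E xy using y0 E0
      by (simp add: field_simps power_inverse)
  qed
  have "(\<Prod>k<p. (x - cosh (w + of_nat k * \<theta>)))
      = (\<Prod>k<p. (y - e * \<omega> ^ k)) * (\<Prod>k<p. (y - inverse e * inverse \<omega> ^ k)) / (2 * y) ^ p"
    by (simp add: fac prod.distrib prod_dividef)
  also have "\<dots> = (y ^ p - e ^ p) * (y ^ p - inverse e ^ p) / (2 * y) ^ p"
  proof -
    have rt1: "(\<omega> ^ k) ^ p = 1" for k by (metis power_mult mult.commute wp power_one)
    have rt2: "(inverse \<omega> ^ k) ^ p = 1" for k using rt1[of k] by (metis power_inverse inverse_1)
    show ?thesis
      using prod_roots_pow[OF p inj1, of y e] prod_roots_pow[OF p inj2, of y "inverse e"] rt1 rt2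
      by simp
  qed
  finally have P: "(\<Prod>k<p. (x - cosh (w + of_nat k * \<theta>))) = (y ^ p - e ^ p) * (y ^ p - inverse e ^ p) / (2 * y) ^ p" .
  have T: "cheb_T p x = (y ^ p + inverse y ^ p) / 2" unfolding xy by (rule cheb_T_y[OF y0])
  have C: "cosh (of_nat p * w) = (e ^ p + inverse e ^ p) / 2"
    by (simp add: cosh_exp' e_def exp_of_nat_mult power_inverse)
  have two: "(2::complex) ^ p = 2 * 2 ^ (p - 1)" using p by (cases p) auto
  have yp: "y ^ p \<noteq> 0" and ep: "e ^ p \<noteq> 0" using y0 e0 by auto
  show ?thesis unfolding \<theta>_def[symmetric] P T C power_mult_distrib two
    using yp ep by (simp add: field_simps power_inverse)
qed



lemma cos_nonzero:
  fixes p p' a :: nat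
  assumes cop: "coprime p p'" and a1: "1 \<le> a" and a2: "2 * a < p"
  shows "cos (pi * real p' * real a / real p) \<noteq> 0"
proof
  assume "cos (pi * real p' * real a / real p) = 0"
  then obtain n :: nat where n: "pi * real p' * real a / real p = real n * (pi/2) \<or>
        pi * real p' * real a / real p = - (real n * (pi/2))"
    unfolding cos_zero_iff by blast
  have p0: "real p > 0" using a2 by simp
  have pos: "pi * real p' * real a / real p \<ge> 0" using p0 by simp
  have "pi * real p' * real a / real p = real n * (pi/2)"
  proof (cases "pi * real p' * real a / real p = real n * (pi/2)")
    case False
    with n have "pi * real p' * real a / real p = - (real n * (pi/2))" by blast
    moreover have "real n * (pi/2) \<ge> 0" by simp
    ultimately have "real n * (pi/2) = 0" using pos by linarith
    then show ?thesis using \<open>_ = - _\<close> by simp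
  qed
  then have "pi * (2 * real p' * real a) = pi * (real n * real p)" using p0
    by (simp add: field_simps)
  then have "2 * real p' * real a = real n * real p" by simp
  then have "2 * p' * a = n * p" by (metis of_nat_eq_iff of_nat_mult of_nat_numeral)
  then have "p dvd p' * (2 * a)" by (metis dvd_triv_right mult.assoc mult.commute)
  then have "p dvd 2 * a" using cop by (simp add: coprime_dvd_mult_right_iff)
  then show False using a1 a2 by (auto dest: dvd_imp_le)
qed



lemma cosh_2pin_minus: "cosh (z - of_nat n * (2 * of_real pi * \<i>)) = cosh (z::complex)"
  using cosh_2pin[of "z - of_nat n * (2 * of_real pi * \<i>)" n] by simp

lemma Qb_Suc: "Qbranch p p' \<tau> (Suc k) = cosh (of_nat p' * (\<tau> - 2 * of_real pi * \<i> * of_nat k / of_nat p))"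
  by (simp add: Qbranch_def)

lemma Qb_period:
  assumes "p \<ge> 1"
  shows "Qbranch p p' \<tau> (Suc (k + p)) = Qbranch p p' \<tau> (Suc k)"
proof -
  have "of_nat p' * (\<tau> - 2 * of_real pi * \<i> * of_nat (k + p) / of_nat p)
      = of_nat p' * (\<tau> - 2 * of_real pi * \<i> * of_nat k / of_nat p) - of_nat p' * (2 * of_real pi * \<i>)"
    using assms by (simp add: field_simps)
  then show ?thesis unfolding Qb_Suc by (simp only: cosh_2pin_minus)
qed

lemma Qb_pair:
  fixes p p' a k :: nat and \<tau> :: complex
  assumes "p \<ge> 1"
  shows "Qbranch p p' \<tau> (Suc k) + Qbranch p p' \<tau> (Suc (k + a)) =
    2 * of_real (cos (pi * real p' * real a / real p)) *
    cosh ((- (of_nat p' * \<tau>) + of_real pi * \<i> * of_nat p' * of_nat a / of_nat p)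
          + of_nat k * (2 * of_real pi * \<i> * of_nat p' / of_nat p))"
proof -
  define D where "D = \<i> * complex_of_real (pi * real p' * real a / real p)"
  define c where "c = of_nat p' * (\<tau> - 2 * of_real pi * \<i> * of_nat k / of_nat p) - D"
  have 1: "of_nat p' * (\<tau> - 2 * of_real pi * \<i> * of_nat k / of_nat p) = c + D" by (simp add: c_def)
  have 2: "of_nat p' * (\<tau> - 2 * of_real pi * \<i> * of_nat (k + a) / of_nat p) = c - D"
    using assms by (simp add: c_def D_def field_simps)
  have 3: "-c = (- (of_nat p' * \<tau>) + of_real pi * \<i> * of_nat p' * of_nat a / of_nat p)
          + of_nat k * (2 * of_real pi * \<i> * of_nat p' / of_nat p)"
    using assms by (simp add: c_def D_def field_simps)
  have "Qbranch p p' \<tau> (Suc k) + Qbranch p p' \<tau> (Suc (k + a)) = cosh (c + D) + cosh (c - D)"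
    unfolding Qb_Suc 1 2 ..
  also have "\<dots> = 2 * cosh D * cosh (-c)" by (simp add: cosh_sum)
  also have "cosh D = of_real (cos (pi * real p' * real a / real p))"
    unfolding D_def by (simp add: of_real_cos_cosh)
  finally show ?thesis unfolding 3 by (simp add: mult_ac)
qed

lemma Qb_half:
  fixes p p' k :: nat
  assumes "even p" "odd p'" "p \<ge> 1"
  shows "Qbranch p p' \<tau> (Suc (k + p div 2)) = - Qbranch p p' \<tau> (Suc k)"
proof -
  have "of_nat p' * (\<tau> - 2 * of_real pi * \<i> * of_nat (k + p div 2) / of_nat p)
      = of_nat p' * (\<tau> - 2 * of_real pi * \<i> * of_nat k / of_nat p) - of_nat p' * (of_real pi * \<i>)"
  proof -
    have "(of_nat (p div 2) :: complex) = of_nat p / 2" using assms(1) by (auto elim!: evenE)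
    then show ?thesis using assms by (simp add: field_simps)
  qed
  then show ?thesis unfolding Qb_Suc using assms(2) by (simp only: cosh_pin_minus) simp
qed

lemma cheb_sign:
  fixes p p' a :: nat and \<tau> :: complex
  assumes that: "p \<ge> 1"
  shows "cosh (of_nat p * ((- (of_nat p' * \<tau>) + of_real pi * \<i> * of_nat p' * of_nat a / of_nat p)))
         = cheb_T p' ((-1) ^ a * cosh (of_nat p * \<tau>))"
proof -
  have "(-1) ^ a * cosh (of_nat p * \<tau>) = cosh (of_nat p * \<tau> + of_nat a * (of_real pi * \<i>))"
    by (simp add: cosh_pin)
  then have r: "cheb_T p' ((-1) ^ a * cosh (of_nat p * \<tau>)) = cosh (of_nat (p' * p) * \<tau> + of_nat (p' * a) * (of_real pi * \<i>))"
    by (simp add: cheb_T_cosh algebra_simps)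
  have "of_nat p * ((- (of_nat p' * \<tau>) + of_real pi * \<i> * of_nat p' * of_nat a / of_nat p))
      = - (of_nat (p' * p) * \<tau> - of_nat (p' * a) * (of_real pi * \<i>))"
    using that by (simp add: field_simps)
  then have "cosh (of_nat p * ((- (of_nat p' * \<tau>) + of_real pi * \<i> * of_nat p' * of_nat a / of_nat p)))
       = (-1) ^ (p' * a) * cosh (of_nat (p' * p) * \<tau>)"
    by (simp only: cosh_minus cosh_pin_minus)
  also have "\<dots> = cosh (of_nat (p' * p) * \<tau> + of_nat (p' * a) * (of_real pi * \<i>))"
    by (simp only: cosh_pin)
  finally show ?thesis using r by simp
qed



lemma pairs_reindex:
  fixes p :: nat and q :: "nat \<Rightarrow> complex" and Q :: complex
  assumes p: "p \<ge> 1" and per: "\<And>k. q (Suc (k + p)) = q (Suc k)"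
  shows "(\<Prod>(j1, j2) \<in> {(j1, j2). 1 \<le> j1 \<and> j1 < j2 \<and> j2 \<le> p}. (Q - (q j1 + q j2)))
       = (\<Prod>(a, k) \<in> ({1..(p - 1) div 2} \<times> {..<p}) \<union> {(a, k). 2 * a = p \<and> k < a}.
             (Q - (q (Suc k) + q (Suc (k + a)))))"
proof (rule sym, rule prod.reindex_bij_witness[where
      j = "\<lambda>(a, k). if k + a < p then (Suc k, Suc (k + a)) else (Suc (k + a - p), Suc k)"
  and i = "\<lambda>(j1, j2). if 2 * (j2 - j1) \<le> p then (j2 - j1, j1 - 1) else (p - (j2 - j1), j2 - 1)"])
  fix x assume x: "x \<in> ({1..(p - 1) div 2} \<times> {..<p}) \<union> {(a, k). 2 * a = p \<and> k < a}"
  obtain a k where ak: "x = (a, k)" by (cases x)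
  show "(case (case x of (a, k) \<Rightarrow> if k + a < p then (Suc k, Suc (k + a)) else (Suc (k + a - p), Suc k)) of
         (j1, j2) \<Rightarrow> if 2 * (j2 - j1) \<le> p then (j2 - j1, j1 - 1) else (p - (j2 - j1), j2 - 1)) = x"
    using x unfolding ak by auto
  show "(case x of (a, k) \<Rightarrow> if k + a < p then (Suc k, Suc (k + a)) else (Suc (k + a - p), Suc k))
        \<in> {(j1, j2). 1 \<le> j1 \<and> j1 < j2 \<and> j2 \<le> p}"
    using x unfolding ak by auto
  show "(case case x of (a, k) \<Rightarrow> if k + a < p then (Suc k, Suc (k + a)) else (Suc (k + a - p), Suc k) of
         (j1, j2) \<Rightarrow> Q - (q j1 + q j2)) = (case x of (a, k) \<Rightarrow> Q - (q (Suc k) + q (Suc (k + a))))"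
  proof (cases "k + a < p")
    case True then show ?thesis unfolding ak by simp
  next
    case False
    then have "k + a - p + p = k + a" by simp
    then have "q (Suc (k + a)) = q (Suc (k + a - p))" using per[of "k + a - p"] by simp
    then show ?thesis using False unfolding ak by (simp add: add.commute)
  qed
next
  fix y assume y: "y \<in> {(j1, j2). 1 \<le> j1 \<and> j1 < j2 \<and> j2 \<le> p}"
  obtain j1 j2 where jj: "y = (j1, j2)" by (cases y)
  show "(case case y of (j1, j2) \<Rightarrow> if 2 * (j2 - j1) \<le> p then (j2 - j1, j1 - 1) else (p - (j2 - j1), j2 - 1) of
         (a, k) \<Rightarrow> if k + a < p then (Suc k, Suc (k + a)) else (Suc (k + a - p), Suc k)) = y"
    using y unfolding jj by auto
  show "(case y of (j1, j2) \<Rightarrow> if 2 * (j2 - j1) \<le> p then (j2 - j1, j1 - 1) else (p - (j2 - j1), j2 - 1))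
        \<in> ({1..(p - 1) div 2} \<times> {..<p}) \<union> {(a, k). 2 * a = p \<and> k < a}"
    using y unfolding jj by auto
qed



lemma factor_a:
  fixes p p' a :: nat and \<tau> Q :: complex
  assumes p: "p \<ge> 1" and cop: "coprime p p'" and a1: "1 \<le> a" and a2: "2 * a < p"
  defines "C \<equiv> complex_of_real (cos (pi * real p' * real a / real p))"
  shows "(\<Prod>k<p. (Q - (Qbranch p p' \<tau> (Suc k) + Qbranch p p' \<tau> (Suc (k + a)))))
       = (2 * C) ^ p / 2 ^ (p - 1) *
         (cheb_T p (Q / (2 * C)) - cheb_T p' ((-1) ^ a * cosh (of_nat p * \<tau>)))"
proof -
  define w where "w = - (of_nat p' * \<tau>) + of_real pi * \<i> * of_nat p' * of_nat a / (of_nat p :: complex)"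
  define \<theta> where "\<theta> = 2 * of_real pi * \<i> * of_nat p' / (of_nat p :: complex)"
  have C0: "C \<noteq> 0" unfolding C_def using cos_nonzero[OF cop a1 a2] by simp
  have "(\<Prod>k<p. (Q - (Qbranch p p' \<tau> (Suc k) + Qbranch p p' \<tau> (Suc (k + a)))))
      = (\<Prod>k<p. (2 * C) * (Q / (2 * C) - cosh (w + of_nat k * \<theta>)))"
    using C0 by (intro prod.cong refl) (simp add: Qb_pair[OF p] C_def w_def \<theta>_def field_simps)
  also have "\<dots> = (2 * C) ^ p * (\<Prod>k<p. (Q / (2 * C) - cosh (w + of_nat k * \<theta>)))"
    by (simp add: prod.distrib)
  also have "(\<Prod>k<p. (Q / (2 * C) - cosh (w + of_nat k * \<theta>)))
       = (cheb_T p (Q / (2 * C)) - cosh (of_nat p * w)) / 2 ^ (p - 1)"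
    using cheb_prod[OF p cop, of "Q / (2 * C)" w] unfolding \<theta>_def[symmetric]
    by (simp add: field_simps)
  also have "cosh (of_nat p * w) = cheb_T p' ((-1) ^ a * cosh (of_nat p * \<tau>))"
    unfolding w_def by (rule cheb_sign[OF p])
  finally show ?thesis by simp
qed

theorem proposition5p3p1:
  fixes p p' :: nat
  assumes "p \<ge> 2" and "p' \<ge> 1" and "coprime p p'"
  shows "\<exists>c::complex. c \<noteq> 0 \<and> (\<forall>\<zeta> Q.
     G2cl p p' \<zeta> Q = c *
       (if odd p then
          (\<Prod>a\<in>{1..(p - 1) div 2}.
             cheb_T p (Q / (2 * of_real (cos (pi * real p' * real a / real p))))
             - cheb_T p' ((-1) ^ a * \<zeta>))
        else
          Q ^ (p div 2) *
          (\<Prod>a\<in>{1..(p - 2) div 2}.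
             cheb_T p (Q / (2 * of_real (cos (pi * real p' * real a / real p))))
             - cheb_T p' ((-1) ^ a * \<zeta>))))"
proof -
  have p: "p \<ge> 1" using assms(1) by simp
  note cop = assms(3)
  define Cf where "Cf a = complex_of_real (cos (pi * real p' * real a / real p))" for a :: nat
  define c where "c = (\<Prod>a\<in>{1..(p - 1) div 2}. (2 * Cf a) ^ p / 2 ^ (p - 1))"
  have c0: "c \<noteq> 0" unfolding c_def Cf_def
    using cos_nonzero[OF cop] by (auto simp: prod_zero_iff)
  have same: "(p - 2) div 2 = (p - 1) div 2" if "even p" using that assms(1) by presburger
  show ?thesis
  proof (intro exI conjI allI)
    show "c \<noteq> 0" by (fact c0)
    fix \<zeta> Q :: complex
    define \<tau> where "\<tau> = (SOME t. cosh (of_nat p * t) = \<zeta>)"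
    have ex: "\<exists>t. cosh (of_nat p * t) = \<zeta>"
    proof -
      obtain z where "cosh z = \<zeta>" using cosh_surj by blast
      then have "cosh (of_nat p * (z / of_nat p)) = \<zeta>" using p by simp
      then show ?thesis by blast
    qed
    have tau: "cosh (of_nat p * \<tau>) = \<zeta>" unfolding \<tau>_def by (rule someI_ex[OF ex])
    define q where "q = Qbranch p p' \<tau>"
    have per: "q (Suc (k + p)) = q (Suc k)" for k unfolding q_def by (rule Qb_period[OF p])
    define A where "A = ({1..(p - 1) div 2} \<times> {..<p})"
    define E where "E = {(a, k). 2 * a = p \<and> k < (a::nat)}"
    have finA: "finite A" unfolding A_def by simp
    have finE: "finite E"
    proof -
      have "E \<subseteq> {..p} \<times> {..p}" unfolding E_def by auto
      then show ?thesis by (rule finite_subset) simp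
    qed
    have disj: "A \<inter> E = {}" unfolding A_def E_def by auto
    have G: "G2cl p p' \<zeta> Q = (\<Prod>(a, k) \<in> A \<union> E. (Q - (q (Suc k) + q (Suc (k + a)))))"
      unfolding G2cl_def Let_def \<tau>_def[symmetric] q_def[symmetric] A_def E_def
      by (rule pairs_reindex[OF p per])
    also have "\<dots> = (\<Prod>(a, k) \<in> A. (Q - (q (Suc k) + q (Suc (k + a))))) *
                    (\<Prod>(a, k) \<in> E. (Q - (q (Suc k) + q (Suc (k + a)))))"
      by (rule prod.union_disjoint[OF finA finE disj])
    also have "(\<Prod>(a, k) \<in> A. (Q - (q (Suc k) + q (Suc (k + a)))))
       = (\<Prod>a\<in>{1..(p - 1) div 2}. (\<Prod>k<p. (Q - (q (Suc k) + q (Suc (k + a))))))"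
      unfolding A_def by (rule prod.cartesian_product[symmetric])
    also have "\<dots> = (\<Prod>a\<in>{1..(p - 1) div 2}. (2 * Cf a) ^ p / 2 ^ (p - 1) *
         (cheb_T p (Q / (2 * Cf a)) - cheb_T p' ((-1) ^ a * \<zeta>)))"
    proof (intro prod.cong refl)
      fix a assume "a \<in> {1..(p - 1) div 2}"
      then have a1: "1 \<le> a" and a2: "2 * a < p" by auto
      show "(\<Prod>k<p. (Q - (q (Suc k) + q (Suc (k + a))))) = (2 * Cf a) ^ p / 2 ^ (p - 1) *
         (cheb_T p (Q / (2 * Cf a)) - cheb_T p' ((-1) ^ a * \<zeta>))"
        unfolding q_def Cf_def tau[symmetric] by (rule factor_a[OF p cop a1 a2])
    qed
    also have "\<dots> = c * (\<Prod>a\<in>{1..(p - 1) div 2}.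
         (cheb_T p (Q / (2 * Cf a)) - cheb_T p' ((-1) ^ a * \<zeta>)))"
      unfolding c_def by (rule prod.distrib)
    also have "(\<Prod>(a, k) \<in> E. (Q - (q (Suc k) + q (Suc (k + a))))) = (if odd p then 1 else Q ^ (p div 2))"
    proof (cases "odd p")
      case True
      then have "E = {}" unfolding E_def by auto
      then show ?thesis using True by simp
    next
      case False
      then have ev: "even p" by simp
      have op: "odd p'"
      proof
        assume "even p'"
        then have "is_unit (2::nat)" using coprime_common_divisor[OF cop] ev by blast
        then show False by simp
      qed
      have "E = (\<lambda>k. (p div 2, k)) ` {..<p div 2}" unfolding E_def using ev by (auto elim!: evenE)
      then have "(\<Prod>(a, k) \<in> E. (Q - (q (Suc k) + q (Suc (k + a)))))
          = (\<Prod>k<p div 2. (Q - (q (Suc k) + q (Suc (k + p div 2)))))"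
        by (simp add: prod.reindex inj_on_def)
      also have "\<dots> = (\<Prod>k<p div 2. Q)"
        unfolding q_def using Qb_half[OF ev op p] by simp
      finally show ?thesis using False by simp
    qed
    finally show "G2cl p p' \<zeta> Q = c *
       (if odd p then
          (\<Prod>a\<in>{1..(p - 1) div 2}.
             cheb_T p (Q / (2 * of_real (cos (pi * real p' * real a / real p))))
             - cheb_T p' ((-1) ^ a * \<zeta>))
        else
          Q ^ (p div 2) *
          (\<Prod>a\<in>{1..(p - 2) div 2}.
             cheb_T p (Q / (2 * of_real (cos (pi * real p' * real a / real p))))
             - cheb_T p' ((-1) ^ a * \<zeta>)))"
      unfolding Cf_def using same by (auto simp: mult_ac)
  qed
qed

end
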